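(* Let $f$, $\mathcal{I}$, and the notation for streams be as in the context, and let $0 < c \le 1$ and $\epsilon > 0$. Let $\mathcal{A}$ be an algorithm with the $c$-approximation property (not necessarily monotone). Let $S_1, S_2, S_3$ be finite streams and suppose $\mathcal{A}(S_1\circ S_2) \le (1+\epsilon)\,\mathcal{A}(S_2)$. Then $$\mathcal{A}(S_2\circ S_3) \ge \frac{c^2}{c+1+\epsilon}\, f(\mathtt{OPT}_{123}),$$ where $\mathtt{OPT}_{123}$ is an optimal solution for the stream $S_1\circ S_2\circ S_3$.
   Context: Let $U$ be a finite set of items and $f: 2^U \to \mathbb{R}_{\ge 0}$ a nonnegative submodular function, i.e. $f(A\cup\{v\}) - f(A) \ge f(B\cup\{v\}) - f(B)$ for all $A\subseteq B\subset U$ and $v\in U\setminus B$. Let $\mathcal{I}\subseteq 2^U$ be a hereditary constraint: $A\in\mathcal{I}$ and $A'\subseteq A$ imply $A'\in\mathcal{I}$ (with $\emptyset\in\mathcal{I}$). A stream is a finite sequence of items of $U$; $S_1\circ S_2$ denotes concatenation. For a stream $S$, an optimal solution $\mathtt{OPT}_S$ is a set maximizing $f$ over all sets in $\mathcal{I}$ consisting of items occurring in $S$. An algorithm $\mathcal{A}$ maps each stream $S$ to a set in $\mathcal{I}$ consisting of items occurring in $S$; $\mathcal{A}(S)$ denotes the $f$-value of that set. $\mathcal{A}$ has the $c$-approximation property if for every stream $S$, $\mathcal{A}(S)\ge c\cdot f(\mathtt{OPT}_S)$. *)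

theory Defs
  imports Complex_Main
begin

definition nonneg_submodular :: "'a set \<Rightarrow> ('a set \<Rightarrow> real) \<Rightarrow> bool" where
  "nonneg_submodular U f \<longleftrightarrow>
     (\<forall>A. A \<subseteq> U \<longrightarrow> f A \<ge> 0) \<and>
     (\<forall>A B v. A \<subseteq> B \<longrightarrow> B \<subset> U \<longrightarrow> v \<in> U - B \<longrightarrow>
        f (insert v A) - f A \<ge> f (insert v B) - f B)"

definition hereditary :: "'a set \<Rightarrow> 'a set set \<Rightarrow> bool" where
  "hereditary U \<I> \<longleftrightarrow> \<I> \<subseteq> Pow U \<and> {} \<in> \<I> \<and>
     (\<forall>A A'. A \<in> \<I> \<longrightarrow> A' \<subseteq> A \<longrightarrow> A' \<in> \<I>)"

definition is_opt :: "('a set \<Rightarrow> real) \<Rightarrow> 'a set set \<Rightarrow> 'a list \<Rightarrow> 'a set \<Rightarrow> bool" where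
  "is_opt f \<I> S X \<longleftrightarrow> X \<in> \<I> \<and> X \<subseteq> set S \<and>
     (\<forall>Y. Y \<in> \<I> \<longrightarrow> Y \<subseteq> set S \<longrightarrow> f Y \<le> f X)"

definition is_algorithm :: "'a set \<Rightarrow> 'a set set \<Rightarrow> ('a list \<Rightarrow> 'a set) \<Rightarrow> bool" where
  "is_algorithm U \<I> Alg \<longleftrightarrow>
     (\<forall>S. set S \<subseteq> U \<longrightarrow> Alg S \<in> \<I> \<and> Alg S \<subseteq> set S)"

definition c_approx :: "'a set \<Rightarrow> ('a set \<Rightarrow> real) \<Rightarrow> 'a set set \<Rightarrow> real \<Rightarrow> ('a list \<Rightarrow> 'a set) \<Rightarrow> bool" where
  "c_approx U f \<I> c Alg \<longleftrightarrow>
     (\<forall>S X. set S \<subseteq> U \<longrightarrow> is_opt f \<I> S X \<longrightarrow> f (Alg S) \<ge> c * f X)"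

end

theory Submission
  imports Defs
begin

lemma submod_diff:
  assumes sm: "nonneg_submodular U f" and fin: "finite X"
    and "C \<subseteq> D" "D \<subseteq> U" "X \<subseteq> U" "X \<inter> D = {}"
  shows "f (D \<union> X) - f D \<le> f (C \<union> X) - f C"
  using fin assms(3-)
proof (induction X rule: finite_induct)
  case empty then show ?case by simp
next
  case (insert x X)
  have IH: "f (D \<union> X) - f D \<le> f (C \<union> X) - f C" using insert by auto
  have xn: "x \<notin> D \<union> X" using insert by auto
  have sub: "C \<union> X \<subseteq> D \<union> X" using insert by auto
  have strict: "D \<union> X \<subset> U" using insert xn by auto
  have "f (insert x (D \<union> X)) - f (D \<union> X) \<le> f (insert x (C \<union> X)) - f (C \<union> X)"
    using sm sub strict xn insert.prems unfolding nonneg_submodular_def by auto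
  then show ?case using IH by simp
qed

lemma opt_exists:
  assumes "finite U" "hereditary U I" "set S \<subseteq> U"
  shows "\<exists>X. is_opt f I S X"
proof -
  define F where "F = {Y \<in> I. Y \<subseteq> set S}"
  have "F \<subseteq> Pow U" using assms unfolding F_def hereditary_def by auto
  then have finF: "finite F" using assms(1) by (simp add: finite_subset)
  have neF: "{} \<in> F" using assms unfolding F_def hereditary_def by auto
  have "Max (f ` F) \<in> f ` F" using finF neF by (intro Max_in) auto
  then obtain X where X: "X \<in> F" "f X = Max (f ` F)" by auto
  have "\<forall>Y\<in>F. f Y \<le> f X" using X finF by auto
  then show ?thesis using X unfolding is_opt_def F_def by auto
qed

theorem lemma2:
  fixes U :: "'a set" and f :: "'a set \<Rightarrow> real" and \<I> :: "'a set set"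
    and Alg :: "'a list \<Rightarrow> 'a set" and c \<epsilon> :: real
    and S1 S2 S3 :: "'a list" and OPT123 :: "'a set"
  assumes "finite U"
    and "nonneg_submodular U f"
    and "hereditary U \<I>"
    and "0 < c" and "c \<le> 1" and "\<epsilon> > 0"
    and "is_algorithm U \<I> Alg"
    and "c_approx U f \<I> c Alg"
    and "set S1 \<subseteq> U" and "set S2 \<subseteq> U" and "set S3 \<subseteq> U"
    and "f (Alg (S1 @ S2)) \<le> (1 + \<epsilon>) * f (Alg S2)"
    and "is_opt f \<I> (S1 @ S2 @ S3) OPT123"
  shows "f (Alg (S2 @ S3)) \<ge> c ^ 2 / (c + 1 + \<epsilon>) * f OPT123"
proof -
  note sm = assms(2) and her = assms(3)
  have s12: "set (S1 @ S2) \<subseteq> U" and s23: "set (S2 @ S3) \<subseteq> U" using assms by auto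
  obtain O1 where O1: "is_opt f \<I> (S1 @ S2) O1" using opt_exists[OF assms(1) her s12] by blast
  obtain O2 where O2: "is_opt f \<I> (S2 @ S3) O2" using opt_exists[OF assms(1) her s23] by blast
  define Ot where "Ot = OPT123"
  define A where "A = Ot \<inter> set (S1 @ S2)"
  define B where "B = Ot \<inter> set S3 - set (S1 @ S2)"
  have OI: "Ot \<in> \<I>" and Osub: "Ot \<subseteq> set (S1 @ S2 @ S3)" using assms(13) unfolding Ot_def is_opt_def by auto
  have OU: "Ot \<subseteq> U" using OI her unfolding hereditary_def by auto
  have AOt: "A \<subseteq> Ot" and BOt: "B \<subseteq> Ot" unfolding A_def B_def by auto
  have herI: "\<And>X Y. X \<in> \<I> \<Longrightarrow> Y \<subseteq> X \<Longrightarrow> Y \<in> \<I>" using her unfolding hereditary_def by blast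
  have AI: "A \<in> \<I>" and BI: "B \<in> \<I>" using herI[OF OI AOt] herI[OF OI BOt] by auto
  have Oeq: "Ot = A \<union> B" using Osub unfolding A_def B_def by auto
  have finB: "finite B" using OU assms(1) unfolding B_def by (intro finite_subset[OF _ assms(1)]) auto
  have "f (A \<union> B) - f A \<le> f ({} \<union> B) - f {}"
    by (rule submod_diff[OF sm finB]) (use OU in \<open>auto simp: A_def B_def\<close>)
  moreover have "f {} \<ge> 0" using sm unfolding nonneg_submodular_def by auto
  ultimately have fO: "f Ot \<le> f A + f B" using Oeq by simp
  have fA: "f A \<le> f O1" using O1 AI unfolding is_opt_def A_def by auto
  have fB: "f B \<le> f O2" using O2 BI unfolding is_opt_def B_def by auto
  have c1: "c * f O1 \<le> f (Alg (S1 @ S2))" using assms(8) s12 O1 unfolding c_approx_def by auto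
  have c2: "c * f O2 \<le> f (Alg (S2 @ S3))" using assms(8) s23 O2 unfolding c_approx_def by auto
  have al: "Alg S2 \<in> \<I>" "Alg S2 \<subseteq> set S2" using assms(7,10) unfolding is_algorithm_def by auto
  then have "Alg S2 \<subseteq> set (S2 @ S3)" by auto
  then have a2: "f (Alg S2) \<le> f O2" using al O2 unfolding is_opt_def by blast
  define a where "a = f (Alg (S2 @ S3))"
  have "c^2 * f Ot \<le> c^2 * (f O1 + f O2)"
    using fO fA fB assms(4) by (intro mult_left_mono) auto
  also have "\<dots> = c * (c * f O1) + c * (c * f O2)" by (simp add: power2_eq_square algebra_simps)
  also have "\<dots> \<le> c * ((1+\<epsilon>) * f O2) + c * a"
  proof -
    have m: "(1+\<epsilon>) * f (Alg S2) \<le> (1+\<epsilon>) * f O2"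
      using a2 assms(6) by (intro mult_left_mono) auto
    have h1: "c * f O1 \<le> (1+\<epsilon>) * f O2"
      using c1 assms(12) m by linarith
    have h2: "c * (c * f O1) \<le> c * ((1+\<epsilon>) * f O2)"
      using h1 assms(4) by (intro mult_left_mono) auto
    have h3: "c * (c * f O2) \<le> c * a"
      using c2 assms(4) unfolding a_def by (intro mult_left_mono) auto
    show ?thesis using h2 h3 by linarith
  qed
  also have "\<dots> \<le> (1+\<epsilon>) * a + c * a"
  proof -
    have e: "c * ((1+\<epsilon>) * f O2) = (1+\<epsilon>) * (c * f O2)" by (simp only: mult.left_commute)
    have "(1+\<epsilon>) * (c * f O2) \<le> (1+\<epsilon>) * a" using c2 assms(6) unfolding a_def by (intro mult_left_mono) auto
    then show ?thesis using e by linarith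
  qed
  finally have fin: "c^2 * f Ot \<le> a * (c + 1 + \<epsilon>)" by (simp only: distrib_left distrib_right mult.commute add.commute add.left_commute mult_1_left mult_1_right)
  have pos: "c + 1 + \<epsilon> > 0" using assms(4,6) by simp
  have "c ^ 2 / (c + 1 + \<epsilon>) * f Ot = (c^2 * f Ot) / (c + 1 + \<epsilon>)" by simp
  also have "\<dots> \<le> a" using fin pos by (simp only: pos_divide_le_eq)
  finally show ?thesis unfolding a_def Ot_def .
qed

end
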